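(* Let $\mathbf{A}$ be a $0$-$1$ matrix of full row rank with $I$ columns and at least one $1$ in every column, let $RM_{\boldsymbol p}(\mathbf{A})=\{\boldsymbol p\in\mathbb R^I_{>0}:\mathbf1'\boldsymbol p=1,\ \log\boldsymbol p=\mathbf A'\boldsymbol\theta\text{ for some }\boldsymbol\theta\}$, let $\mathbf D$ be a $K\times I$ matrix whose rows form a basis of $\mathrm{Ker}(\mathbf A)$, and let $\boldsymbol p_0\in RM_{\boldsymbol p}(\mathbf A)$, $\boldsymbol Y_N\sim\mathrm{Mult}(N,\boldsymbol p_0)$. Suppose the model has the overall effect, i.e. the vector $\mathbf 1$ lies in the row space of $\mathbf A$. Then the covariance matrix of the asymptotic normal distribution (as $N\to\infty$) of $N^{1/2}(\hat{\boldsymbol p}_N-\boldsymbol p_0)$ conditional on existence of the MLE, and of $N^{1/2}(\tilde{\boldsymbol p}_N-\boldsymbol p_0)$, namely $\mathbf M\boldsymbol\Sigma\mathbf M'$ with $\boldsymbol\Sigma=\Delta[\boldsymbol p_0]-\boldsymbol p_0\boldsymbol p_0'$, $\mathbf H=(\mathbf 1,\Delta[\boldsymbol p_0^{-1}]\mathbf D')$, $\mathbf M=\mathbf I-\Delta[\boldsymbol p_0]\mathbf H(\mathbf H'\Delta[\boldsymbol p_0]\mathbf H)^{-1}\mathbf H'$, is equal to $$\boldsymbol\Sigma-\mathbf D'(\mathbf D\Delta[\boldsymbol p_0^{-1}]\mathbf D')^{-1}\mathbf D.$$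
   Context: $\Delta[\boldsymbol v]$ is the diagonal matrix with diagonal $\boldsymbol v$; vector powers and logs are componentwise. $\hat{\boldsymbol p}_N$ is the MLE of $\boldsymbol p_0$ under the model (maximizer of $\boldsymbol Y_N'\log\boldsymbol p$ over the model); $\tilde{\boldsymbol p}_N$ equals $\hat{\boldsymbol p}_N$ when the MLE exists and $(1/I)\mathbf1$ otherwise. *)

theory Defs
  imports "HOL-Analysis.Analysis"
begin

definition Delta :: "real ^ 'n \<Rightarrow> real ^ 'n ^ 'n" where
  "Delta v = (\<chi> i j. if i = j then v $ i else 0)"

definition outer :: "real ^ 'n \<Rightarrow> real ^ 'n ^ 'n" where
  "outer p = (\<chi> i j. p $ i * p $ j)"

definition vinv :: "real ^ 'n \<Rightarrow> real ^ 'n" where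
  "vinv p = (\<chi> i. inverse (p $ i))"

definition vlog :: "real ^ 'n \<Rightarrow> real ^ 'n" where
  "vlog p = (\<chi> i. ln (p $ i))"

definition RM :: "real ^ 'i ^ 'j \<Rightarrow> (real ^ 'i) set" where
  "RM A = {p. (\<forall>i. p $ i > 0) \<and> sum (\<lambda>i. p $ i) UNIV = 1 \<and>
              (\<exists>\<theta>. vlog p = transpose A *v \<theta>)}"

text \<open>H = (1, Delta[p^-1] D'), an I x (1+K) matrix; the column Inl () is the column of ones.\<close>
definition Hmat :: "real ^ 'i \<Rightarrow> real ^ 'i ^ 'k \<Rightarrow> real ^ (unit + 'k) ^ 'i" where
  "Hmat p D = (\<chi> i c. case c of Inl _ \<Rightarrow> 1 | Inr k \<Rightarrow> D $ k $ i / p $ i)"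

end

theory Submission
  imports Defs
begin

lemma matrix_inv_eq:
  fixes A :: "real^'n^'n"
  assumes "A ** B = mat 1" "B ** A = mat 1"
  shows "matrix_inv A = B"
proof -
  have "\<exists>X. A ** X = mat 1 \<and> X ** A = mat 1" using assms by blast
  then have X: "A ** matrix_inv A = mat 1 \<and> matrix_inv A ** A = mat 1"
    unfolding matrix_inv_def by (rule someI_ex)
  have "matrix_inv A = matrix_inv A ** (A ** B)" using assms by simp
  also have "\<dots> = B" using X by (simp add: matrix_mul_assoc)
  finally show ?thesis .
qed

lemma sum_UNIV_Plus:
  "(\<Sum>c\<in>(UNIV::(unit+'k::finite) set). f c) = f (Inl ()) + (\<Sum>k\<in>UNIV. f (Inr k))"
  by (subst UNIV_Plus_UNIV[symmetric], subst sum.Plus) (auto simp: UNIV_unit)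

definition blk :: "real \<Rightarrow> real^'k^'k \<Rightarrow> real^(unit+'k)^(unit+'k)" where
 "blk a X = (\<chi> c d. case c of Inl _ \<Rightarrow> (case d of Inl _ \<Rightarrow> a | Inr _ \<Rightarrow> 0)
     | Inr k \<Rightarrow> (case d of Inl _ \<Rightarrow> 0 | Inr l \<Rightarrow> X $ k $ l))"

lemma blk_mult: "blk a X ** blk b Y = blk (a*b) (X ** Y)"
  unfolding blk_def matrix_matrix_mult_def
  by (auto simp: vec_eq_iff sum_UNIV_Plus split: sum.splits)

lemma blk_one: "(mat 1 :: real^(unit+'k::finite)^(unit+'k)) = blk 1 (mat 1)"
  unfolding blk_def mat_def
  by (auto simp: vec_eq_iff split: sum.splits)

lemma mm_diff_left: "(A::real^'n^'m) ** (B - C) = A ** B - A ** C"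
  by (simp add: vec_eq_iff matrix_matrix_mult_def algebra_simps sum_subtractf)
lemma mm_diff_right: "((A::real^'n^'m) - B) ** C = A ** C - B ** C"
  by (simp add: vec_eq_iff matrix_matrix_mult_def algebra_simps sum_subtractf)
lemma mm_add_right: "((A::real^'n^'m) + B) ** C = A ** C + B ** C"
  by (simp add: vec_eq_iff matrix_matrix_mult_def algebra_simps sum.distrib)
lemma mm_zero_left: "(0::real^'n^'m) ** C = 0"
  by (simp add: vec_eq_iff matrix_matrix_mult_def)
lemma mm_zero_right: "(C::real^'n^'m) ** 0 = 0"
  by (simp add: vec_eq_iff matrix_matrix_mult_def)
lemma transpose_diff: "transpose ((A::real^'n^'m) - B) = transpose A - transpose B"
  by (simp add: vec_eq_iff transpose_def)
lemma transpose_Delta: "transpose (Delta v) = Delta v"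
  by (simp add: vec_eq_iff transpose_def Delta_def)
lemma transpose_outer: "transpose (outer v) = outer v"
  by (simp add: vec_eq_iff transpose_def outer_def)

lemma mm_ent: "((X::real^'n^'m) ** Y) $ i $ j = (\<Sum>k\<in>UNIV. X$i$k * Y$k$j)"
  by (simp add: matrix_matrix_mult_def)
lemma tr_ent: "transpose X $ i $ j = X $ j $ i"
  by (simp add: transpose_def)

lemma Delta_left: "(Delta v ** X) $ i $ j = v$i * X$i$j"
  unfolding Delta_def matrix_matrix_mult_def
  by (simp add: if_distrib[where f="\<lambda>x. x * _"] cong: if_cong)
lemma Delta_right: "(X ** Delta v) $ i $ j = X$i$j * v$j"
  unfolding Delta_def matrix_matrix_mult_def
  by (simp add: if_distrib[where f="\<lambda>x. _ * x"] cong: if_cong)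

theorem corollary3p9:
  fixes A :: "real ^ 'i ^ 'j" and D :: "real ^ 'i ^ 'k" and p0 :: "real ^ 'i"
  assumes zero_one: "\<forall>j i. A $ j $ i = 0 \<or> A $ j $ i = 1"
    and col_one: "\<forall>i. \<exists>j. A $ j $ i = 1"
    and full_row_rank: "rank A = CARD('j)"
    and D_inj: "inj (\<lambda>k. row k D)"
    and D_indep: "independent (rows D)"
    and D_span: "span (rows D) = {x. A *v x = 0}"
    and p0_RM: "p0 \<in> RM A"
    and overall: "\<exists>c. (\<chi> i. 1) = transpose A *v c"
  shows "(let \<Sigma> = Delta p0 - outer p0;
              H = Hmat p0 D;
              M = mat 1 - Delta p0 ** H ** matrix_inv (transpose H ** Delta p0 ** H) ** transpose H
          in M ** \<Sigma> ** transpose M =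
             \<Sigma> - transpose D ** matrix_inv (D ** Delta (vinv p0) ** transpose D) ** D)"
proof -
  have ppos: "\<And>i. p0$i > 0" and psum: "(\<Sum>i\<in>UNIV. p0$i) = 1"
    using p0_RM by (auto simp: RM_def)
  have pnz: "\<And>i. p0$i \<noteq> 0" using ppos by (metis less_irrefl)
  have Aker: "A *v row k D = 0" for k
  proof -
    have "row k D \<in> rows D" by (auto simp: rows_def)
    then have "row k D \<in> span (rows D)" by (rule span_base)
    then show ?thesis using D_span by auto
  qed
  obtain c where c: "(\<chi> i. 1) = transpose A *v c" using overall by blast
  have D1: "(\<Sum>i\<in>UNIV. D$k$i) = 0" for k
  proof -
    have "(\<Sum>i\<in>UNIV. D$k$i) = inner (row k D) (\<chi> i. 1)"
      by (simp add: inner_vec_def row_def)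
    also have "\<dots> = inner (c v* A) (row k D)" by (simp add: c inner_commute)
    also have "\<dots> = inner c (A *v row k D)" by (rule dot_lmul_matrix)
    also have "\<dots> = 0" by (simp add: Aker)
    finally show ?thesis .
  qed
  define q where "q = vinv p0"
  have qent: "q$i = 1 / p0$i" for i by (simp add: q_def vinv_def divide_inverse)
  define G where "G = D ** Delta q ** transpose D"
  have Gent: "G$k$l = (\<Sum>i\<in>UNIV. D$k$i * D$l$i / p0$i)" for k l
  proof -
    have "G$k$l = (\<Sum>i\<in>UNIV. (D ** Delta q)$k$i * D$l$i)"
      unfolding G_def by (simp add: matrix_matrix_mult_def transpose_def)
    then show ?thesis by (simp add: Delta_right qent)
  qed
  have Gsym: "transpose G = G"
    by (simp add: G_def matrix_transpose_mul transpose_Delta matrix_mul_assoc)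
  have Gker: "\<forall>x. G *v x = 0 \<longrightarrow> x = 0"
  proof (intro allI impI)
    fix x assume Gx: "G *v x = 0"
    define y where "y = transpose D *v x"
    have "0 = inner x (G *v x)" by (simp add: Gx)
    also have "G *v x = D *v (Delta q *v y)"
      unfolding G_def y_def by (simp only: matrix_vector_mul_assoc matrix_mul_assoc)
    also have "inner x (D *v (Delta q *v y)) = inner y (Delta q *v y)"
      by (simp add: y_def flip: dot_lmul_matrix)
    also have "\<dots> = (\<Sum>i\<in>UNIV. (y$i)^2 / p0$i)"
      by (simp add: inner_vec_def matrix_vector_mult_def Delta_def qent
          if_distrib[where f="\<lambda>x. x * _"] power2_eq_square cong: if_cong)
    finally have s0: "(\<Sum>i\<in>UNIV. (y$i)^2 / p0$i) = 0" by simp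
    have nn: "\<And>i. i\<in>UNIV \<Longrightarrow> (y$i)^2 / p0$i \<ge> 0" using ppos by (simp add: less_imp_le)
    have all0: "\<forall>i\<in>UNIV. (y$i)^2 / p0$i = 0"
      by (rule iffD1[OF sum_nonneg_eq_0_iff[OF finite nn] s0])
    have yi: "y$i = 0" for i
    proof -
      have "(y$i)^2 / p0$i = 0" using all0 by blast
      then show ?thesis using pnz[of i] by simp
    qed
    have y0: "y = 0" using yi by (simp add: vec_eq_iff)
    have sumz: "(\<Sum>k\<in>UNIV. x$k *\<^sub>R row k D) = 0"
    proof -
      have "transpose D *v x = (\<Sum>k\<in>UNIV. x$k *s row k D)"
        by (simp only: matrix_mult_sum column_transpose)
      then show ?thesis using y0 unfolding y_def by (simp only: scalar_mult_eq_scaleR)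
    qed
    define u where "u = (\<lambda>v. x $ (inv (\<lambda>k. row k D) v))"
    have rowsD: "rows D = range (\<lambda>k. row k D)" by (auto simp: rows_def)
    have "(\<Sum>v\<in>rows D. u v *\<^sub>R v) = (\<Sum>k\<in>UNIV. x$k *\<^sub>R row k D)"
      unfolding rowsD u_def by (subst sum.reindex[OF D_inj]) (simp add: inv_f_f[OF D_inj])
    then have z: "(\<Sum>v\<in>rows D. u v *\<^sub>R v) = 0" using sumz by simp
    have "x$k = 0" for k
    proof -
      have "u (row k D) = 0"
        by (rule independentD[OF D_indep _ subset_refl z]) (auto simp: rowsD)
      then show ?thesis by (simp add: u_def inv_f_f[OF D_inj])
    qed
    then show "x = 0" by (simp add: vec_eq_iff)
  qed
  obtain B where BG: "B ** G = mat 1" using Gker matrix_left_invertible_ker by blast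
  have GB: "G ** B = mat 1" using BG matrix_left_right_inverse by blast
  have Ginv: "matrix_inv G = B" by (rule matrix_inv_eq[OF GB BG])
  have Bsym: "transpose B = B"
  proof -
    have "transpose B ** G = mat 1"
      using GB by (metis Gsym matrix_transpose_mul transpose_mat)
    then have "transpose B = transpose B ** (G ** B)" using GB by simp
    also have "\<dots> = B" by (simp add: matrix_mul_assoc \<open>transpose B ** G = mat 1\<close>)
    finally show ?thesis .
  qed
  define H where "H = Hmat p0 D"
  have Hent: "H$i$c = (case c of Inl _ \<Rightarrow> 1 | Inr k \<Rightarrow> D$k$i / p0$i)" for i c
    by (simp add: H_def Hmat_def)
  have cancel1: "x / p0$i * p0$i = x" for x i using pnz[of i] by simp
  have cancel2: "p0$i * (x / p0$i) = x" for x i using pnz[of i] by simp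
  have Nent: "(transpose H ** Delta p0 ** H)$c$d = (\<Sum>i\<in>UNIV. H$i$c * p0$i * H$i$d)" for c d
  proof -
    have "(transpose H ** Delta p0 ** H)$c$d = (\<Sum>i\<in>UNIV. (transpose H ** Delta p0)$c$i * H$i$d)"
      by (simp add: matrix_matrix_mult_def)
    then show ?thesis by (simp add: Delta_right transpose_def)
  qed
  have N: "transpose H ** Delta p0 ** H = blk 1 G"
  proof -
    have "(transpose H ** Delta p0 ** H)$c$d = blk 1 G $ c $ d" for c d
    proof (cases c; cases d)
      fix a b assume "c = Inl a" "d = Inl b"
      then show ?thesis by (simp add: Nent Hent blk_def psum)
    next
      fix a l assume "c = Inl a" "d = Inr l"
      then show ?thesis by (simp add: Nent Hent blk_def cancel2 D1 pnz)
    next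
      fix a l assume "c = Inr l" "d = Inl a"
      then show ?thesis by (simp add: Nent Hent blk_def cancel1 D1 pnz)
    next
      fix k l assume "c = Inr k" "d = Inr l"
      then show ?thesis by (simp add: Nent Hent blk_def cancel1 Gent pnz)
    qed
    then show ?thesis by (simp add: vec_eq_iff)
  qed
  have Ninv: "matrix_inv (transpose H ** Delta p0 ** H) = blk 1 B"
    unfolding N by (rule matrix_inv_eq) (simp_all add: blk_mult GB BG flip: blk_one)
  define U :: "real^'i^'i" where "U = (\<chi> i j. p0$i)"
  define W where "W = transpose D ** B ** D ** Delta q"
  have HB: "(H ** blk 1 B)$i$c = (case c of Inl _ \<Rightarrow> 1 | Inr l \<Rightarrow> (\<Sum>k\<in>UNIV. D$k$i / p0$i * B$k$l))" for i c
    by (cases c) (simp_all add: matrix_matrix_mult_def sum_UNIV_Plus Hent blk_def)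
  have R: "Delta p0 ** H ** blk 1 B ** transpose H = U + W"
  proof -
    have "(Delta p0 ** H ** blk 1 B ** transpose H)$i$j = (U + W)$i$j" for i j
    proof -
      have "(Delta p0 ** H ** blk 1 B ** transpose H)$i$j = p0$i * ((H ** blk 1 B) ** transpose H)$i$j"
        by (simp only: matrix_mul_assoc[symmetric] Delta_left)
      also have "\<dots> = p0$i * (1 + (\<Sum>l\<in>UNIV. (\<Sum>k\<in>UNIV. D$k$i / p0$i * B$k$l) * (D$l$j / p0$j)))"
        unfolding mm_ent[of "H ** blk 1 B"] sum_UNIV_Plus HB tr_ent Hent by simp
      also have "\<dots> = p0$i + (\<Sum>l\<in>UNIV. (\<Sum>k\<in>UNIV. D$k$i * B$k$l) * D$l$j) / p0$j"
        using pnz[of i] pnz[of j]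
        by (simp add: distrib_left sum_distrib_left sum_divide_distrib sum_distrib_right field_simps)
      also have "\<dots> = (U + W)$i$j"
        unfolding U_def W_def vector_add_component Delta_right
        by (simp add: mm_ent tr_ent qent divide_inverse)
      finally show ?thesis .
    qed
    then show ?thesis by (simp add: vec_eq_iff)
  qed
  define Sg where "Sg = Delta p0 - outer p0"
  define M where "M = mat 1 - (U + W)"
  define S where "S = Sg - transpose D ** B ** D"
  have USg: "U ** Sg = 0"
  proof -
    have "(U ** Sg)$i$j = 0" for i j
    proof -
      have "(U ** outer p0)$i$j = p0$i * p0$j * (\<Sum>k\<in>UNIV. p0$k)"
        by (simp add: U_def outer_def matrix_matrix_mult_def sum_distrib_left mult_ac)
      then show ?thesis
        by (simp add: Sg_def mm_diff_left Delta_right U_def psum)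
    qed
    then show ?thesis by (simp add: vec_eq_iff)
  qed
  have qSg: "Delta q ** Sg = mat 1 - (\<chi> i j. p0$j)"
  proof -
    have "(Delta q ** Sg)$i$j = (mat 1 - (\<chi> i j. p0$j))$i$j" for i j
      unfolding Sg_def mm_diff_left vector_minus_component Delta_left
      by (simp add: Delta_def outer_def mat_def qent pnz)
    then show ?thesis by (simp add: vec_eq_iff)
  qed
  have DP: "D ** (\<chi> i j. p0$j) = 0"
    by (simp add: vec_eq_iff matrix_matrix_mult_def D1 flip: sum_distrib_right)
  have WSg: "W ** Sg = transpose D ** B ** D"
  proof -
    have "W ** Sg = transpose D ** B ** (D ** (Delta q ** Sg))"
      by (simp add: W_def matrix_mul_assoc)
    also have "\<dots> = transpose D ** B ** D"
      unfolding qSg mm_diff_left DP by (simp add: mm_zero_right)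
    finally show ?thesis .
  qed
  have UD: "U ** transpose D = 0"
    by (simp add: vec_eq_iff matrix_matrix_mult_def U_def transpose_def D1 flip: sum_distrib_left)
  have WD: "W ** transpose D = transpose D"
  proof -
    have "W ** transpose D = transpose D ** (B ** G)"
      by (simp add: W_def G_def matrix_mul_assoc)
    then show ?thesis by (simp add: BG)
  qed
  have MD: "M ** transpose D = 0"
    by (simp add: M_def mm_diff_right mm_add_right UD WD)
  have MSg: "M ** Sg = S"
    by (simp add: M_def S_def mm_diff_right mm_add_right USg WSg)
  have MS: "M ** S = S"
  proof -
    have "M ** S = M ** Sg - M ** transpose D ** B ** D"
      by (simp add: S_def mm_diff_left matrix_mul_assoc)
    also have "\<dots> = S" by (simp add: MSg MD mm_zero_left)
    finally show ?thesis .
  qed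
  have Ssym: "transpose S = S"
    by (simp add: S_def Sg_def transpose_diff transpose_Delta transpose_outer matrix_transpose_mul Bsym matrix_mul_assoc)
  have final: "M ** Sg ** transpose M = S"
  proof -
    have "M ** Sg ** transpose M = S ** transpose M" by (simp add: MSg)
    also have "\<dots> = transpose (M ** transpose S)" by (simp add: matrix_transpose_mul)
    also have "\<dots> = S" by (simp add: Ssym MS)
    finally show ?thesis .
  qed
  show ?thesis
    unfolding Let_def H_def[symmetric] q_def[symmetric] G_def[symmetric] Ninv Ginv R
    using final by (simp only: M_def Sg_def S_def)
qed

end
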